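(* Let $\mu\in\mathcal{P}_2(\mathbb{R}^d)$ and $\mathsf{r}\ge0$, and let $s_{\mathsf r}$ and $m_\mu(\cdot,\mathsf r)$ be as defined in the context. Then: (1) If $s_{\mathsf r}(1)=0$, then $\delta\mapsto m_\mu(\delta,\mathsf r)$ is non-decreasing on $(0,1]$. (2) If $s_{\mathsf r}(1)>0$, then $\delta\mapsto m_\mu(\delta,\mathsf r)$ is either (i) non-increasing on $(0,1]$, or (ii) U-shaped on $(0,1]$, i.e. first non-increasing and then non-decreasing.
   Context: For $\mu\in\mathcal{P}_2(\mathbb{R}^d)$ and SNR $\mathsf r\ge0$, let $\mathbf{Y}_{\mathsf r}:=\mathsf r\mathbf{X}+\mathbf{Z}$ with $\mathbf{X}\sim\mu$ and $\mathbf{Z}\sim\mathcal{N}(0,I_d)$ independent. The localization function is $L_{\mathsf r}(y)=\|\mathrm{Cov}[\mathsf r\mathbf{X}\mid\mathbf{Y}_{\mathsf r}=y]\|_{op}$ and $\mathbf{L}_{\mathsf r}=L_{\mathsf r}(\mathbf{Y}_{\mathsf r})$; its survival function is $s_{\mathsf r}(u):=\mathbb{P}(\mathbf{L}_{\mathsf r}>u)$ for $u\ge0$. For $\delta\in(0,1]$, define $h_\mu(\delta,\mathsf r):=\int_{1-\delta}^\infty s_{\mathsf r}(u)\,du$ and $m_\mu(\delta,\mathsf r):=h_\mu(\delta,\mathsf r)/\delta$. *)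

theory Defs
  imports "HOL-Probability.Probability"
begin

definition std_gauss :: "'a::euclidean_space measure" where
  "std_gauss = density lborel
     (\<lambda>z. ennreal ((2 * pi) powr (- real DIM('a) / 2) * exp (- (norm z)\<^sup>2 / 2)))"

text \<open>Posterior law of X given Y_r = y (regular version, Bayes formula for the
  Gaussian channel Y_r = r X + Z): density proportional to exp(r <x,y> - r^2 |x|^2/2).\<close>
definition post_weight :: "real \<Rightarrow> 'a::euclidean_space \<Rightarrow> 'a \<Rightarrow> real" where
  "post_weight r y x = exp (r * (x \<bullet> y) - r\<^sup>2 * (norm x)\<^sup>2 / 2)"

definition posterior :: "'a::euclidean_space measure \<Rightarrow> real \<Rightarrow> 'a \<Rightarrow> 'a measure" where
  "posterior \<mu> r y = density \<mu>
     (\<lambda>x. ennreal (post_weight r y x / (\<integral>x'. post_weight r y x' \<partial>\<mu>)))"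

definition cov_op :: "'b measure \<Rightarrow> ('b \<Rightarrow> 'a::euclidean_space) \<Rightarrow> 'a \<Rightarrow> 'a" where
  "cov_op P W v = (\<integral>w. (v \<bullet> (W w - (\<integral>w'. W w' \<partial>P))) *\<^sub>R (W w - (\<integral>w'. W w' \<partial>P)) \<partial>P)"

definition loc_fun :: "'a::euclidean_space measure \<Rightarrow> real \<Rightarrow> 'a \<Rightarrow> real" where
  "loc_fun \<mu> r y = onorm (cov_op (posterior \<mu> r y) (\<lambda>x. r *\<^sub>R x))"

definition surv :: "'a::euclidean_space measure \<Rightarrow> real \<Rightarrow> real \<Rightarrow> real" where
  "surv \<mu> r u = measure (\<mu> \<Otimes>\<^sub>M std_gauss)
     {p \<in> space (\<mu> \<Otimes>\<^sub>M std_gauss). loc_fun \<mu> r (r *\<^sub>R fst p + snd p) > u}"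

definition h_fun :: "'a::euclidean_space measure \<Rightarrow> real \<Rightarrow> real \<Rightarrow> real" where
  "h_fun \<mu> \<delta> r = (\<integral>u\<in>{1 - \<delta>..}. surv \<mu> r u \<partial>lborel)"

definition m_fun :: "'a::euclidean_space measure \<Rightarrow> real \<Rightarrow> real \<Rightarrow> real" where
  "m_fun \<mu> \<delta> r = h_fun \<mu> \<delta> r / \<delta>"

end

theory Submission
  imports Defs
begin


lemma antimono_meas:
  fixes s :: "real \<Rightarrow> real"
  assumes "antimono s"
  shows "s \<in> borel_measurable lborel"
proof -
  have "mono (\<lambda>x. - s x)" using assms by (auto simp: mono_def antimono_def)
  then have "(\<lambda>x. - s x) \<in> borel_measurable borel" by (rule borel_measurable_mono)
  then have "(\<lambda>x. - (- s x)) \<in> borel_measurable borel" by measurable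
  then show ?thesis by simp
qed

lemma set_integrable_const_Icc:
  "set_integrable lborel {a..b::real} (\<lambda>_. c::real)"
proof -
  have "integrable lborel (\<lambda>x. c * indicator {a..b} x)"
    by (intro integrable_mult_right integrable_real_indicator) (auto simp: emeasure_lborel_Icc_eq)
  then show ?thesis unfolding set_integrable_def by (simp add: mult.commute)
qed

lemma set_integrable_bounded_Icc:
  fixes s :: "real \<Rightarrow> real"
  assumes "s \<in> borel_measurable lborel" "\<And>u. 0 \<le> s u" "\<And>u. s u \<le> B"
  shows "set_integrable lborel {a..b::real} s"
  apply (rule set_integrable_bound[OF set_integrable_const_Icc[of a b B]])
  using assms order_trans[OF assms(3) abs_ge_self] by (auto simp: set_borel_measurable_def)

lemma partE_int:
  fixes s :: "real \<Rightarrow> real"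
  assumes anti: "antimono s" and nn: "\<And>u. 0 \<le> s u" and bd: "\<And>u. s u \<le> B"
  and int0: "set_integrable lborel {a0..} s"
  shows "set_integrable lborel {a..} s"
proof -
  have m: "s \<in> borel_measurable lborel" using anti by (rule antimono_meas)
  have "set_integrable lborel ({a..a0} \<union> {a0..}) s"
    by (rule set_integrable_Un[OF set_integrable_bounded_Icc[OF m nn bd] int0]) auto
  then show ?thesis by (rule set_integrable_subset) auto
qed

lemma partE_bounds:
  fixes s :: "real \<Rightarrow> real"
  assumes anti: "antimono s" and nn: "\<And>u. 0 \<le> s u" and bd: "\<And>u. s u \<le> B"
  and int0: "set_integrable lborel {a0..} s" and ab: "a \<le> b"
  shows "(b - a) * s b \<le> (LINT u:{a..}|lborel. s u) - (LINT u:{b..}|lborel. s u)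
       \<and> (LINT u:{a..}|lborel. s u) - (LINT u:{b..}|lborel. s u) \<le> (b - a) * s a"
proof -
  have m: "s \<in> borel_measurable lborel" using anti by (rule antimono_meas)
  have iA: "set_integrable lborel {a..<b} s"
    by (rule set_integrable_subset[OF set_integrable_bounded_Icc[OF m nn bd, of a b]]) auto
  have iB: "set_integrable lborel {b..} s" by (rule partE_int[OF anti nn bd int0])
  have eq: "{a..} = {a..<b} \<union> {b..}" using ab by auto
  have split: "(LINT u:{a..}|lborel. s u) = (LINT u:{a..<b}|lborel. s u) + (LINT u:{b..}|lborel. s u)"
    unfolding eq by (rule set_integral_Un[OF _ iA iB]) auto
  have ic: "set_integrable lborel {a..<b} (\<lambda>_. c)" for c :: real
    by (rule set_integrable_subset[OF set_integrable_const_Icc[of a b c]]) auto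
  have c: "(LINT u:{a..<b}|lborel. c) = (b - a) * c" for c :: real
    using ab by (subst set_integral_const) auto
  have "(LINT u:{a..<b}|lborel. s b) \<le> (LINT u:{a..<b}|lborel. s u)"
    by (rule set_integral_mono[OF ic iA]) (use anti in \<open>auto simp: antimono_def\<close>)
  moreover have "(LINT u:{a..<b}|lborel. s u) \<le> (LINT u:{a..<b}|lborel. s a)"
    by (rule set_integral_mono[OF iA ic]) (use anti in \<open>auto simp: antimono_def\<close>)
  ultimately show ?thesis using split c by (auto simp: mult.commute)
qed



lemma small_bound:
  fixes a e B :: real
  assumes "e > 0" "B \<ge> 0" "\<And>t. 0 < t \<Longrightarrow> t < e \<Longrightarrow> a \<le> t * B"
  shows "a \<le> 0"
proof (rule ccontr)
  assume "\<not> a \<le> 0" then have a: "a > 0" by simp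
  define t where "t = min (e/2) (a / (2*(B+1)))"
  have t0: "0 < t" "t < e" using a assms(1,2) by (auto simp: t_def)
  have "t * B \<le> a / (2*(B+1)) * B" using assms(2) by (intro mult_right_mono) (auto simp: t_def)
  also have "\<dots> = a * (B / (2*(B+1)))" by simp
  also have "\<dots> < a * 1" using a assms(2) by (intro mult_strict_left_mono) (auto simp: field_simps)
  finally have "t * B < a" by simp
  then show False using assms(3)[OF t0] by simp
qed

lemma partA:
  fixes h \<phi> :: "real \<Rightarrow> real"
  assumes pm: "\<And>x y. 0 \<le> x \<Longrightarrow> x \<le> y \<Longrightarrow> y \<le> 1 \<Longrightarrow> \<phi> x \<le> \<phi> y"
    and pnn: "\<And>x. 0 \<le> x \<Longrightarrow> x \<le> 1 \<Longrightarrow> 0 \<le> \<phi> x"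
    and pb: "\<And>x. 0 \<le> x \<Longrightarrow> x \<le> 1 \<Longrightarrow> \<phi> x \<le> B"
    and hi: "\<And>x y. 0 \<le> x \<Longrightarrow> x \<le> y \<Longrightarrow> y \<le> 1 \<Longrightarrow>
               (y - x) * \<phi> x \<le> h y - h x \<and> h y - h x \<le> (y - x) * \<phi> y"
    and h0: "h 0 \<ge> 0"
  shows "(h 0 = 0 \<longrightarrow> mono_on {0<..1} (\<lambda>d. h d / d)) \<and>
         (h 0 > 0 \<longrightarrow> (\<exists>c\<in>{0<..1}. antimono_on {0<..c} (\<lambda>d. h d / d) \<and> mono_on {c..1} (\<lambda>d. h d / d)))"
proof -
  define D where "D d = d * \<phi> d - h d" for d
  define m where "m d = h d / d" for d
  have K1: "(y - x) * D x \<le> x * h y - y * h x" if "0 < x" "x < y" "y \<le> 1" for x y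
  proof -
    have "x * ((y - x) * \<phi> x) \<le> x * (h y - h x)"
      using hi[of x y] that by (intro mult_left_mono) auto
    then show ?thesis by (simp add: D_def algebra_simps)
  qed
  have K2: "x * h y - y * h x \<le> (y - x) * D y" if "0 < x" "x < y" "y \<le> 1" for x y
  proof -
    have "y * (h y - h x) \<le> y * ((y - x) * \<phi> y)"
      using hi[of x y] that by (intro mult_left_mono) auto
    then show ?thesis by (simp add: D_def algebra_simps)
  qed
  have up: "m x \<le> m y" if "0 < x" "x < y" "y \<le> 1" "D x \<ge> 0" for x y
  proof -
    have "0 \<le> (y - x) * D x" using that by simp
    then have "0 \<le> x * h y - y * h x" using K1[OF that(1-3)] by linarith
    then show ?thesis using that by (simp add: m_def field_simps)
  qed
  have down: "m y \<le> m x" if "0 < x" "x < y" "y \<le> 1" "D y \<le> 0" for x y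
  proof -
    have "(y - x) * D y \<le> 0" using that by (simp add: mult_nonneg_nonpos)
    then have "x * h y - y * h x \<le> 0" using K2[OF that(1-3)] by linarith
    then show ?thesis using that by (simp add: m_def field_simps)
  qed
  have Dmono: "D x \<le> D y" if "0 \<le> x" "x \<le> y" "y \<le> 1" for x y
  proof -
    have "x * \<phi> x \<le> x * \<phi> y" using pm[of x y] that by (intro mult_left_mono) auto
    then show ?thesis using hi[of x y] that by (simp add: D_def algebra_simps)
  qed
  have hge: "h d \<ge> h 0" if "0 \<le> d" "d \<le> 1" for d
  proof -
    have "0 \<le> (d - 0) * \<phi> 0" using pnn[of 0] that by simp
    then show ?thesis using hi[of 0 d] that by linarith
  qed
  have mnn: "m d \<ge> 0" if "0 < d" "d \<le> 1" for d
    using hge[of d] h0 that by (simp add: m_def)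
  show ?thesis
  proof (intro conjI impI)
    assume "h 0 = 0"
    have Dnn: "D d \<ge> 0" if "0 \<le> d" "d \<le> 1" for d
      using hi[of 0 d] that \<open>h 0 = 0\<close> by (simp add: D_def)
    have "mono_on {0<..1} m"
    proof (rule mono_onI)
      fix x y :: real assume "x \<in> {0<..1}" "y \<in> {0<..1}" "x \<le> y"
      then show "m x \<le> m y" using up[of x y] Dnn[of x]
        by (cases "x = y") auto
    qed
    then show "mono_on {0<..1} (\<lambda>d. h d / d)" unfolding m_def[abs_def] .
  next
    assume hpos: "h 0 > 0"
    have B0: "B \<ge> 0" using pnn[of 0] pb[of 0] by simp
    have Dle: "D d \<le> d * B - h 0" if "0 \<le> d" "d \<le> 1" for d
    proof -
      have "d * \<phi> d \<le> d * B" using pb[of d] that by (intro mult_left_mono) auto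
      then show ?thesis using hge[OF that] by (simp add: D_def)
    qed
    define d0 where "d0 = min 1 (h 0 / (2 * (B + 1)))"
    have d0: "0 < d0" "d0 \<le> 1" using hpos B0 by (auto simp: d0_def)
    have "d0 * B < h 0"
    proof -
      have "d0 * B \<le> h 0 / (2 * (B + 1)) * B" using B0 by (intro mult_right_mono) (auto simp: d0_def)
      also have "\<dots> = h 0 * (B / (2*(B+1)))" by simp
      also have "\<dots> < h 0 * 1" using hpos B0 by (intro mult_strict_left_mono) (auto simp: field_simps)
      finally show ?thesis by simp
    qed
    then have Dd0: "D d0 \<le> 0" using Dle[of d0] d0 by simp
    define S where "S = {d\<in>{0<..1}. D d \<le> 0}"
    define c where "c = Sup S"
    have d0S: "d0 \<in> S" using d0 Dd0 by (simp add: S_def)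
    have bdd: "bdd_above S" by (auto simp: S_def bdd_above_def)
    have Sne: "S \<noteq> {}" using d0S by auto
    have c0: "d0 \<le> c" unfolding c_def by (rule cSup_upper[OF d0S bdd])
    have c1: "c \<le> 1" unfolding c_def by (rule cSup_least[OF Sne]) (auto simp: S_def)
    have below: "D d \<le> 0" if dd: "0 < d" "d < c" for d
    proof -
      obtain d' where "d' \<in> S" "d < d'" using less_cSupD[OF Sne, of d] dd c_def by blast
      then show ?thesis using Dmono[of d d'] dd by (auto simp: S_def)
    qed
    have above: "D d > 0" if "c < d" "d \<le> 1" for d
    proof (rule ccontr)
      assume "\<not> D d > 0"
      then have "d \<in> S" using that c0 d0 by (auto simp: S_def)
      then have "d \<le> c" unfolding c_def by (rule cSup_upper[OF _ bdd])
      then show False using that by simp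
    qed
    have Lip: "h y - h x \<le> (y - x) * B" if "0 \<le> x" "x \<le> y" "y \<le> 1" for x y
    proof -
      have "(y - x) * \<phi> y \<le> (y - x) * B" using pb[of y] that by (intro mult_left_mono) auto
      then show ?thesis using hi[OF that] by simp
    qed
    have anti: "antimono_on {0<..c} m"
    proof (rule monotone_onI)
      fix x y assume xy: "x \<in> {0<..c}" "y \<in> {0<..c}" "x \<le> y"
      show "m y \<le> m x"
      proof (cases "x = y")
        case False
        then have xy': "0 < x" "x < y" "y \<le> c" using xy by auto
        show ?thesis
        proof (cases "y < c")
          case True
          then show ?thesis using down[of x y] below[of y] xy' c1 by auto
        next
          case False
          then have yc: "y = c" using xy' by simp
          have "c * (m c - m x) \<le> 0"
          proof (rule small_bound[of "c - x" B])
            show "0 < c - x" using xy' yc by simp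
            show "0 \<le> B" by fact
            fix t assume t: "0 < t" "t < c - x"
            have mt: "m (c - t) \<le> m x" using down[of x "c - t"] below[of "c - t"] t xy' yc c1 by auto
            have "c * m c = h c" using c0 d0 by (simp add: m_def)
            also have "\<dots> \<le> h (c - t) + t * B" using Lip[of "c - t" c] t xy' yc c1 by simp
            also have "h (c - t) = (c - t) * m (c - t)" using t xy' yc by (simp add: m_def)
            also have "(c - t) * m (c - t) \<le> (c - t) * m x" using mt t xy' yc by (intro mult_left_mono) auto
            finally have "c * (m c - m x) \<le> t * (B - m x)" by (simp add: algebra_simps)
            also have "\<dots> \<le> t * B" using mnn[of x] xy' c1 t by (intro mult_left_mono) auto
            finally show "c * (m c - m x) \<le> t * B" .
          qed
          then have "m c - m x \<le> 0" using c0 d0 by (simp add: mult_le_0_iff)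
          then show ?thesis using yc by simp
        qed
      qed simp
    qed
    have mon: "mono_on {c..1} m"
    proof (rule mono_onI)
      fix x y assume xy: "x \<in> {c..1}" "y \<in> {c..1}" "x \<le> y"
      show "m x \<le> m y"
      proof (cases "x = y")
        case False
        then have xy': "c \<le> x" "x < y" "y \<le> 1" using xy by auto
        show ?thesis
        proof (cases "c < x")
          case True
          then show ?thesis using up[of x y] above[of x] xy' c0 d0 by auto
        next
          case False
          then have xc: "x = c" using xy' by simp
          have "c * (m c - m y) \<le> 0"
          proof (rule small_bound[of "y - c" "m y"])
            show "0 < y - c" using xy' xc by simp
            show "0 \<le> m y" using mnn[of y] xy' c0 d0 by simp
            fix t assume t: "0 < t" "t < y - c"
            have mt: "m (c + t) \<le> m y" using up[of "c + t" y] above[of "c + t"] t xy' xc c0 d0 by auto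
            have "c * m c = h c" using c0 d0 by (simp add: m_def)
            also have "\<dots> \<le> h (c + t)"
            proof -
              have "0 \<le> (c + t - c) * \<phi> c" using pnn[of c] t c0 d0 c1 by simp
              then show ?thesis using hi[of c "c + t"] t xy' xc c0 d0 by linarith
            qed
            also have "h (c + t) = (c + t) * m (c + t)" using t c0 d0 by (simp add: m_def)
            also have "(c + t) * m (c + t) \<le> (c + t) * m y" using mt t c0 d0 by (intro mult_left_mono) auto
            finally show "c * (m c - m y) \<le> t * m y" by (simp add: algebra_simps)
          qed
          then have "m c - m y \<le> 0" using c0 d0 by (simp add: mult_le_0_iff)
          then show ?thesis using xc by simp
        qed
      qed simp
    qed
    show "\<exists>c\<in>{0<..1}. antimono_on {0<..c} (\<lambda>d. h d / d) \<and> mono_on {c..1} (\<lambda>d. h d / d)"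
      using anti mon c0 c1 d0 unfolding m_def[abs_def] by auto
  qed
qed



lemma onorm_gt_iff:
  fixes f :: "'a::euclidean_space \<Rightarrow> 'b::real_normed_vector" and D :: "'a set"
  assumes bl: "bounded_linear f"
    and dense: "\<And>X. open X \<Longrightarrow> X \<noteq> {} \<Longrightarrow> \<exists>d\<in>D. d \<in> X"
  shows "u < onorm f \<longleftrightarrow> (\<exists>v\<in>D. u * norm v < norm (f v))"
proof
  assume "u < onorm f"
  then have "\<not> (\<forall>x. norm (f x) \<le> u * norm x)" using onorm_le[of f u] by force
  then obtain x where x: "u * norm x < norm (f x)" by (auto simp: not_le)
  have "open {v. u * norm v < norm (f v)}"
  proof (rule open_Collect_less)
    show "continuous_on UNIV (\<lambda>v. u * norm v)" by (intro continuous_intros)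
    have "continuous_on UNIV f" using bl by (rule linear_continuous_on)
    then show "continuous_on UNIV (\<lambda>v. norm (f v))" by (intro continuous_intros)
  qed
  then show "\<exists>v\<in>D. u * norm v < norm (f v)" using dense x by blast
next
  assume "\<exists>v\<in>D. u * norm v < norm (f v)"
  then obtain v where v: "u * norm v < norm (f v)" by blast
  have "v \<noteq> 0" using v bl by (auto simp: linear_simps)
  then have "norm v > 0" by simp
  have "u * norm v < onorm f * norm v" using v onorm[OF bl, of v] by linarith
  then show "u < onorm f" using \<open>norm v > 0\<close> by simp
qed



context
  fixes \<mu> :: "'a::euclidean_space measure" and r :: real
  assumes P: "prob_space \<mu>" and S: "sets \<mu> = sets borel"
    and I: "integrable \<mu> (\<lambda>x. (norm x)\<^sup>2)"
begin

definition "Zf y = (\<integral>x. post_weight r y x \<partial>\<mu>)"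
definition "gf y x = post_weight r y x / Zf y"
definition "Mf y = (\<integral>x. gf y x *\<^sub>R (r *\<^sub>R x) \<partial>\<mu>)"
definition "Cf y v = (\<integral>x. gf y x *\<^sub>R ((v \<bullet> (r *\<^sub>R x - Mf y)) *\<^sub>R (r *\<^sub>R x - Mf y)) \<partial>\<mu>)"

lemma pair_cong: "measurable (borel \<Otimes>\<^sub>M \<mu>) N = measurable (borel \<Otimes>\<^sub>M borel) N"
  by (rule measurable_cong_sets) (auto intro!: sets_pair_measure_cong simp: S)

lemma mu_cong: "measurable \<mu> N = measurable borel N"
  by (rule measurable_cong_sets) (auto simp: S)

lemma pw_meas[measurable]: "(\<lambda>p. post_weight r (fst p) (snd p)) \<in> borel_measurable (borel \<Otimes>\<^sub>M borel)"
  unfolding post_weight_def by measurable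

lemma Zf_meas[measurable]: "Zf \<in> borel_measurable borel"
proof -
  interpret prob_space \<mu> by (rule P)
  show ?thesis unfolding Zf_def
    by (rule borel_measurable_lebesgue_integral) (simp add: pair_cong case_prod_beta')
qed

lemma gf_meas[measurable]: "(\<lambda>p. gf (fst p) (snd p)) \<in> borel_measurable (borel \<Otimes>\<^sub>M borel)"
  unfolding gf_def by measurable

lemma Mf_meas[measurable]: "Mf \<in> borel_measurable borel"
proof -
  interpret prob_space \<mu> by (rule P)
  show ?thesis unfolding Mf_def
    by (rule borel_measurable_lebesgue_integral) (simp add: pair_cong case_prod_beta')
qed

lemma Cf_meas[measurable]: "(\<lambda>y. Cf y v) \<in> borel_measurable borel"
proof -
  interpret prob_space \<mu> by (rule P)
  show ?thesis unfolding Cf_def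
    by (rule borel_measurable_lebesgue_integral) (simp add: pair_cong case_prod_beta')
qed

lemma pw_bound: "post_weight r y x \<le> exp ((norm y)\<^sup>2 / 2)" "0 < post_weight r y x"
proof -
  have "0 \<le> (norm (y - r *\<^sub>R x))\<^sup>2" by simp
  also have "(norm (y - r *\<^sub>R x))\<^sup>2 = (norm y)\<^sup>2 - 2 * r * (x \<bullet> y) + r\<^sup>2 * (norm x)\<^sup>2"
    unfolding power2_norm_eq_inner by (simp add: inner_diff_left inner_diff_right inner_commute algebra_simps power2_eq_square)
  finally have "r * (x \<bullet> y) - r\<^sup>2 * (norm x)\<^sup>2 / 2 \<le> (norm y)\<^sup>2 / 2" by simp
  then show "post_weight r y x \<le> exp ((norm y)\<^sup>2 / 2)" unfolding post_weight_def by simp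
  show "0 < post_weight r y x" unfolding post_weight_def by simp
qed

lemma Zf_nn: "0 \<le> Zf y"
  unfolding Zf_def by (rule integral_nonneg_AE) (simp add: pw_bound(2) less_imp_le)

lemma gf_nn: "0 \<le> gf y x"
  unfolding gf_def using Zf_nn pw_bound(2)[of y x] by simp

lemma gf_le: "gf y x \<le> exp ((norm y)\<^sup>2 / 2) / Zf y"
  unfolding gf_def using Zf_nn by (intro divide_right_mono pw_bound(1))

lemma gf_meas_borel[measurable]: "gf y \<in> borel_measurable borel"
  unfolding gf_def post_weight_def by measurable

lemma gf_meas_mu: "gf y \<in> borel_measurable \<mu>"
  unfolding mu_cong by (rule gf_meas_borel)

lemma vec_bound:
  fixes v a :: "'a"
  shows "norm ((v \<bullet> a) *\<^sub>R a) \<le> norm v * (norm a)\<^sup>2"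
proof -
  have "norm ((v \<bullet> a) *\<^sub>R a) = \<bar>v \<bullet> a\<bar> * norm a" by simp
  also have "\<dots> \<le> (norm v * norm a) * norm a"
    by (intro mult_right_mono) (auto simp: Cauchy_Schwarz_ineq2)
  finally show ?thesis by (simp add: power2_eq_square mult_ac)
qed

lemma a_bound:
  fixes x m :: "'a"
  shows "(norm (r *\<^sub>R x - m))\<^sup>2 \<le> 2 * r\<^sup>2 * (norm x)\<^sup>2 + 2 * (norm m)\<^sup>2"
proof -
  have "norm (r *\<^sub>R x - m) \<le> \<bar>r\<bar> * norm x + norm m"
    using norm_triangle_ineq4[of "r *\<^sub>R x" m] by simp
  then have "(norm (r *\<^sub>R x - m))\<^sup>2 \<le> (\<bar>r\<bar> * norm x + norm m)\<^sup>2"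
    by (intro power_mono) auto
  also have "\<dots> \<le> 2 * r\<^sup>2 * (norm x)\<^sup>2 + 2 * (norm m)\<^sup>2"
    using sum_squares_ge_zero[of "\<bar>r\<bar> * norm x - norm m" 0]
    by (simp add: power2_eq_square algebra_simps) 
  finally show ?thesis .
qed

lemma Cf_integrable: "integrable \<mu> (\<lambda>x. gf y x *\<^sub>R ((v \<bullet> (r *\<^sub>R x - Mf y)) *\<^sub>R (r *\<^sub>R x - Mf y)))"
proof -
  interpret prob_space \<mu> by (rule P)
  define K where "K = exp ((norm y)\<^sup>2 / 2) / Zf y"
  have K0: "0 \<le> K" unfolding K_def using Zf_nn by simp
  show ?thesis
  proof (rule Bochner_Integration.integrable_bound)
    show "integrable \<mu> (\<lambda>x. K * norm v * (2 * r\<^sup>2 * (norm x)\<^sup>2 + 2 * (norm (Mf y))\<^sup>2))"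
      using I by (intro integrable_mult_right integrable_add integrable_const) auto
    show "(\<lambda>x. gf y x *\<^sub>R ((v \<bullet> (r *\<^sub>R x - Mf y)) *\<^sub>R (r *\<^sub>R x - Mf y))) \<in> borel_measurable \<mu>"
      unfolding mu_cong by measurable
    show "AE x in \<mu>. norm (gf y x *\<^sub>R ((v \<bullet> (r *\<^sub>R x - Mf y)) *\<^sub>R (r *\<^sub>R x - Mf y)))
        \<le> norm (K * norm v * (2 * r\<^sup>2 * (norm x)\<^sup>2 + 2 * (norm (Mf y))\<^sup>2))"
    proof (rule AE_I2)
      fix x
      have "norm (gf y x *\<^sub>R ((v \<bullet> (r *\<^sub>R x - Mf y)) *\<^sub>R (r *\<^sub>R x - Mf y)))
           = gf y x * norm ((v \<bullet> (r *\<^sub>R x - Mf y)) *\<^sub>R (r *\<^sub>R x - Mf y))"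
        using gf_nn[of y x] by (simp add: abs_mult)
      also have "\<dots> \<le> K * (norm v * (2 * r\<^sup>2 * (norm x)\<^sup>2 + 2 * (norm (Mf y))\<^sup>2))"
      proof (rule mult_mono)
        show "gf y x \<le> K" unfolding K_def by (rule gf_le)
        have "norm ((v \<bullet> (r *\<^sub>R x - Mf y)) *\<^sub>R (r *\<^sub>R x - Mf y)) \<le> norm v * (norm (r *\<^sub>R x - Mf y))\<^sup>2"
          by (rule vec_bound)
        also have "\<dots> \<le> norm v * (2 * r\<^sup>2 * (norm x)\<^sup>2 + 2 * (norm (Mf y))\<^sup>2)"
          by (intro mult_left_mono a_bound) auto
        finally show "norm ((v \<bullet> (r *\<^sub>R x - Mf y)) *\<^sub>R (r *\<^sub>R x - Mf y)) \<le> norm v * (2 * r\<^sup>2 * (norm x)\<^sup>2 + 2 * (norm (Mf y))\<^sup>2)" .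
      qed (use K0 in auto)
      also have "\<dots> \<le> norm (K * norm v * (2 * r\<^sup>2 * (norm x)\<^sup>2 + 2 * (norm (Mf y))\<^sup>2))"
        by (simp add: mult.assoc)
      finally show "norm (gf y x *\<^sub>R ((v \<bullet> (r *\<^sub>R x - Mf y)) *\<^sub>R (r *\<^sub>R x - Mf y)))
        \<le> norm (K * norm v * (2 * r\<^sup>2 * (norm x)\<^sup>2 + 2 * (norm (Mf y))\<^sup>2))" .
    qed
  qed
qed

lemma Cf_linear: "bounded_linear (Cf y)"
proof -
  have "linear (Cf y)"
  proof (rule linearI)
    fix v w :: 'a
    have "Cf y (v + w) = (\<integral>x. gf y x *\<^sub>R ((v \<bullet> (r *\<^sub>R x - Mf y)) *\<^sub>R (r *\<^sub>R x - Mf y))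
          + gf y x *\<^sub>R ((w \<bullet> (r *\<^sub>R x - Mf y)) *\<^sub>R (r *\<^sub>R x - Mf y)) \<partial>\<mu>)"
      unfolding Cf_def by (intro Bochner_Integration.integral_cong) (auto simp: inner_add_left scaleR_add_left scaleR_add_right)
    also have "\<dots> = Cf y v + Cf y w"
      unfolding Cf_def by (rule Bochner_Integration.integral_add[OF Cf_integrable Cf_integrable])
    finally show "Cf y (v + w) = Cf y v + Cf y w" .
  next
    fix c :: real and v :: 'a
    have "Cf y (c *\<^sub>R v) = (\<integral>x. c *\<^sub>R (gf y x *\<^sub>R ((v \<bullet> (r *\<^sub>R x - Mf y)) *\<^sub>R (r *\<^sub>R x - Mf y))) \<partial>\<mu>)"
      unfolding Cf_def by (intro Bochner_Integration.integral_cong) auto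
    also have "\<dots> = c *\<^sub>R Cf y v"
      unfolding Cf_def by (rule integral_scaleR_right)
    finally show "Cf y (c *\<^sub>R v) = c *\<^sub>R Cf y v" .
  qed
  then show ?thesis by (simp add: linear_conv_bounded_linear)
qed

lemma cov_eq: "cov_op (posterior \<mu> r y) (\<lambda>x. r *\<^sub>R x) = Cf y"
proof
  fix v
  have post: "posterior \<mu> r y = density \<mu> (\<lambda>x. ennreal (gf y x))"
    unfolding posterior_def gf_def Zf_def ..
  have mean: "(\<integral>w'. r *\<^sub>R w' \<partial>posterior \<mu> r y) = Mf y"
    unfolding post Mf_def
    by (rule integral_density) (auto simp: mu_cong gf_nn)
  show "cov_op (posterior \<mu> r y) (\<lambda>x. r *\<^sub>R x) v = Cf y v"
    unfolding cov_op_def mean unfolding post Cf_def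
    by (rule integral_density) (auto simp: mu_cong gf_nn)
qed

lemma loc_eq: "loc_fun \<mu> r y = onorm (Cf y)"
  unfolding loc_fun_def cov_eq ..

lemma loc_meas: "loc_fun \<mu> r \<in> borel_measurable borel"
proof -
  obtain D :: "'a set" where D: "countable D" "\<And>X. open X \<Longrightarrow> X \<noteq> {} \<Longrightarrow> \<exists>d\<in>D. d \<in> X"
    using countable_dense_exists by blast
  have "{y \<in> space borel. u < loc_fun \<mu> r y} \<in> sets borel" for u
  proof -
    have "{y \<in> space borel. u < loc_fun \<mu> r y} = (\<Union>v\<in>D. {y \<in> space borel. u * norm v < norm (Cf y v)})"
      unfolding loc_eq using onorm_gt_iff[OF Cf_linear D(2)] by auto
    also have "\<dots> \<in> sets borel"
    proof -
      have "{y \<in> space borel. u * norm v < norm (Cf y v)} \<in> sets borel" for v by measurable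
      then show ?thesis by (intro sets.countable_UN'[OF D(1)]) auto
    qed
    finally show ?thesis .
  qed
  then show ?thesis by (subst borel_measurable_iff_greater) auto
qed

end


lemma exp_norm_prod:
  fixes z :: "'a::euclidean_space"
  shows "exp (- (norm z)\<^sup>2 / 2) = (\<Prod>b\<in>Basis. exp (- (z \<bullet> b)\<^sup>2 / 2))"
proof -
  have "(norm z)\<^sup>2 = (\<Sum>b\<in>Basis. (z \<bullet> b)\<^sup>2)"
    unfolding power2_norm_eq_inner by (subst euclidean_inner) (simp add: power2_eq_square)
  then have "- (norm z)\<^sup>2 / 2 = (\<Sum>b\<in>Basis. - (z \<bullet> b)\<^sup>2 / 2)"
    by (simp add: sum_divide_distrib sum_negf)
  then show ?thesis by (simp add: exp_sum)
qed

lemma gauss1_finite: "(\<integral>\<^sup>+t. ennreal (exp (- t\<^sup>2 / 2)) \<partial>lborel) < \<infinity>"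
proof -
  have "integrable lborel (\<lambda>t. sqrt (2 * pi) * std_normal_density t)"
    by (intro integrable_mult_right integrable_normal_density) auto
  moreover have "(\<lambda>t. sqrt (2 * pi) * std_normal_density t) = (\<lambda>t. exp (- t\<^sup>2 / 2))"
    by (auto simp: std_normal_density_def)
  ultimately have "integrable lborel (\<lambda>t::real. exp (- t\<^sup>2 / 2))" by simp
  then show ?thesis by (simp add: integrable_iff_bounded)
qed

lemma std_gauss_finite: "finite_measure (std_gauss :: 'a::euclidean_space measure)"
proof (rule finite_measureI)
  define K :: real where "K = (2 * pi) powr (- real DIM('a) / 2)"
  have K0: "0 \<le> K" by (simp add: K_def)
  have e: "emeasure (std_gauss :: 'a measure) (space std_gauss)
      = (\<integral>\<^sup>+z. ennreal (K * exp (- (norm (z::'a))\<^sup>2 / 2)) \<partial>lborel)"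
    unfolding std_gauss_def K_def by (simp add: emeasure_density)
  also have "\<dots> = ennreal K * (\<integral>\<^sup>+z. ennreal (exp (- (norm (z::'a))\<^sup>2 / 2)) \<partial>lborel)"
    using K0 by (simp add: ennreal_mult nn_integral_cmult)
  finally have e2: "emeasure (std_gauss :: 'a measure) (space std_gauss) = ennreal K * (\<integral>\<^sup>+z. ennreal (exp (- (norm (z::'a))\<^sup>2 / 2)) \<partial>lborel)" .
  have "(\<integral>\<^sup>+z. ennreal (exp (- (norm (z::'a))\<^sup>2 / 2)) \<partial>lborel)
      = (\<integral>\<^sup>+z. (\<Prod>b\<in>(Basis::'a set). (\<lambda>t. ennreal (exp (- t\<^sup>2 / 2))) (z \<bullet> b)) \<partial>lborel)"
    unfolding exp_norm_prod by (simp add: prod_ennreal)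
  also have "\<dots> = (\<Prod>b\<in>(Basis::'a set). \<integral>\<^sup>+t. ennreal (exp (- t\<^sup>2 / 2)) \<partial>lborel)"
    by (rule nn_integral_lborel_prod) auto
  also have "\<dots> < \<infinity>"
    using gauss1_finite by (simp add: less_top[symmetric] ennreal_prod_eq_top power_eq_top_ennreal)
  finally have "(\<integral>\<^sup>+z. ennreal (exp (- (norm (z::'a))\<^sup>2 / 2)) \<partial>lborel) < \<infinity>" .
  then show "emeasure (std_gauss :: 'a measure) (space std_gauss) \<noteq> \<infinity>"
    unfolding e2 by (simp add: ennreal_mult_eq_top_iff)
qed

lemma sets_std_gauss: "sets (std_gauss :: 'a::euclidean_space measure) = sets borel"
  by (simp add: std_gauss_def)



theorem mainTheorem10:
  fixes \<mu> :: "'a::euclidean_space measure" and r :: real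
  assumes "prob_space \<mu>" and "sets \<mu> = sets borel"
    and "integrable \<mu> (\<lambda>x. (norm x)\<^sup>2)"
    and "r \<ge> 0"
  shows "(surv \<mu> r 1 = 0 \<longrightarrow> mono_on {0<..1} (\<lambda>\<delta>. m_fun \<mu> \<delta> r))
    \<and> (surv \<mu> r 1 > 0 \<longrightarrow>
         (antimono_on {0<..1} (\<lambda>\<delta>. m_fun \<mu> \<delta> r)
          \<or> (\<exists>c\<in>{0<..1}. antimono_on {0<..c} (\<lambda>\<delta>. m_fun \<mu> \<delta> r)
                         \<and> mono_on {c..1} (\<lambda>\<delta>. m_fun \<mu> \<delta> r))))"
proof -
  note P = assms(1) and Sm = assms(2) and I = assms(3)
  define PM where "PM = \<mu> \<Otimes>\<^sub>M (std_gauss :: 'a measure)"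
  interpret mu: prob_space \<mu> by (rule P)
  have fmu: "finite_measure \<mu>" by (rule mu.finite_measure_axioms)
  interpret PM: finite_measure PM
    unfolding PM_def by (rule finite_measure_pair_measure[OF std_gauss_finite fmu])
  have loc_meas'[measurable]: "loc_fun \<mu> r \<in> borel_measurable borel"
    by (rule loc_meas[OF P Sm I])
  have PMcong: "measurable PM N = measurable (borel \<Otimes>\<^sub>M borel) N" for N :: "real measure"
    unfolding PM_def
    by (rule measurable_cong_sets) (auto intro!: sets_pair_measure_cong simp: Sm sets_std_gauss)
  define E where "E u = {p \<in> space PM. u < loc_fun \<mu> r (r *\<^sub>R fst p + snd p)}" for u
  have fm: "(\<lambda>p. loc_fun \<mu> r (r *\<^sub>R fst p + snd p)) \<in> borel_measurable PM"
    unfolding PMcong by measurable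
  have Esets: "E u \<in> sets PM" for u
    unfolding E_def using fm by measurable
  define s where "s u = surv \<mu> r u" for u
  have s_eq: "s u = measure PM (E u)" for u
    unfolding s_def surv_def E_def PM_def ..
  define B where "B = measure PM (space PM)"
  have s_nn: "0 \<le> s u" for u unfolding s_eq by simp
  have s_bd: "s u \<le> B" for u unfolding s_eq B_def by (rule PM.bounded_measure)
  have s_anti: "antimono s"
  proof (rule antimonoI)
    fix x y :: real assume "x \<le> y"
    then have "E y \<subseteq> E x" by (auto simp: E_def)
    then show "s y \<le> s x" unfolding s_eq by (rule PM.finite_measure_mono[OF _ Esets])
  qed
  define H where "H x = (LINT u:{x..}|lborel. s u)" for x
  have hf: "h_fun \<mu> \<delta> r = H (1 - \<delta>)" for \<delta>
    unfolding h_fun_def H_def s_def ..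
  have mf: "m_fun \<mu> \<delta> r = H (1 - \<delta>) / \<delta>" for \<delta>
    unfolding m_fun_def hf ..
  have H_nn: "0 \<le> H x" for x
    unfolding H_def set_lebesgue_integral_def
    by (rule integral_nonneg_AE) (auto intro!: AE_I2 s_nn simp: indicator_def)
  show ?thesis
  proof (cases "set_integrable lborel {0..} s")
    case False
    have "\<not> set_integrable lborel {x..} s" for x
      using partE_int[OF s_anti s_nn s_bd, of x 0] False by blast
    then have "H x = 0" for x
      unfolding H_def set_lebesgue_integral_def set_integrable_def
      by (simp add: not_integrable_integral_eq)
    then have m0: "m_fun \<mu> \<delta> r = 0" for \<delta> unfolding mf by simp
    show ?thesis unfolding m0 by (auto intro!: monotone_onI)
  next
    case True
    define h where "h d = H (1 - d)" for d
    define \<phi> where "\<phi> d = s (1 - d)" for d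
    have A: "(h 0 = 0 \<longrightarrow> mono_on {0<..1} (\<lambda>d. h d / d)) \<and>
         (h 0 > 0 \<longrightarrow> (\<exists>c\<in>{0<..1}. antimono_on {0<..c} (\<lambda>d. h d / d) \<and> mono_on {c..1} (\<lambda>d. h d / d)))"
    proof (rule partA)
      show "\<phi> x \<le> \<phi> y" if "0 \<le> x" "x \<le> y" "y \<le> 1" for x y
        using s_anti that by (auto simp: \<phi>_def antimono_def)
      show "0 \<le> \<phi> x" for x by (simp add: \<phi>_def s_nn)
      show "\<phi> x \<le> B" for x by (simp add: \<phi>_def s_bd)
      show "(y - x) * \<phi> x \<le> h y - h x \<and> h y - h x \<le> (y - x) * \<phi> y"
        if "0 \<le> x" "x \<le> y" "y \<le> 1" for x y
        using partE_bounds[OF s_anti s_nn s_bd True, of "1 - y" "1 - x"] that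
        by (simp add: h_def \<phi>_def H_def)
      show "0 \<le> h 0" by (simp add: h_def H_nn)
    qed
    have mh: "(\<lambda>\<delta>. m_fun \<mu> \<delta> r) = (\<lambda>d. h d / d)"
      by (simp add: mf h_def)
    show ?thesis
    proof (intro conjI impI)
      assume s1: "surv \<mu> r 1 = 0"
      have sz: "s u = 0" if "1 \<le> u" for u
        using s_anti[THEN antimonoD, OF that] s_nn[of u] s1 by (simp add: s_def)
      have "(\<lambda>u. indicator {1..} u *\<^sub>R s u) = (\<lambda>u. 0::real)"
        by (auto simp: indicator_def sz)
      then have "H 1 = 0"
        unfolding H_def set_lebesgue_integral_def by simp
      then have "h 0 = 0" by (simp add: h_def)
      then show "mono_on {0<..1} (\<lambda>\<delta>. m_fun \<mu> \<delta> r)" using A mh by simp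
    next
      assume s1: "surv \<mu> r 1 > 0"
      have "\<exists>n. s (1 + 1 / Suc n) > 0"
      proof (rule ccontr)
        assume "\<not> ?thesis"
        then have z: "s (1 + 1 / Suc n) = 0" for n using s_nn by (meson le_less not_less)
        have "E (1 + 1 / Suc n) \<in> null_sets PM" for n
          using z[of n] Esets by (simp add: s_eq null_sets_def PM.emeasure_eq_measure)
        then have "(\<Union>n. E (1 + 1 / Suc n)) \<in> null_sets PM" by blast
        moreover have "(\<Union>n. E (1 + 1 / Suc n)) = E 1"
        proof
          show "(\<Union>n. E (1 + 1 / Suc n)) \<subseteq> E 1"
            by (auto simp: E_def) (smt (verit, best) of_nat_0_le_iff divide_nonneg_nonneg)
          show "E 1 \<subseteq> (\<Union>n. E (1 + 1 / Suc n))"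
          proof
            fix p assume p: "p \<in> E 1"
            then have "0 < loc_fun \<mu> r (r *\<^sub>R fst p + snd p) - 1" by (simp add: E_def)
            then obtain n where "1 / Suc n < loc_fun \<mu> r (r *\<^sub>R fst p + snd p) - 1"
              using nat_approx_posE by blast
            then have "p \<in> E (1 + 1 / Suc n)" using p by (auto simp: E_def)
            then show "p \<in> (\<Union>n. E (1 + 1 / Suc n))" by blast
          qed
        qed
        ultimately have "measure PM (E 1) = 0" by (simp add: null_sets_def PM.emeasure_eq_measure)
        then show False using s1 by (simp add: s_eq[symmetric] s_def)
      qed
      then obtain n where sn: "s (1 + 1 / Suc n) > 0" by blast
      define e where "e = 1 / real (Suc n)"
      have e0: "e > 0" by (simp add: e_def)
      have "(1 + e - 1) * s (1 + e) \<le> H 1 - H (1 + e)"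
        using partE_bounds[OF s_anti s_nn s_bd True, of 1 "1 + e"] e0 by (simp add: H_def)
      moreover have "0 < e * s (1 + e)" using e0 sn by (simp add: e_def)
      ultimately have "0 < H 1" using H_nn[of "1 + e"] by simp
      then have "h 0 > 0" by (simp add: h_def)
      then show "antimono_on {0<..1} (\<lambda>\<delta>. m_fun \<mu> \<delta> r)
          \<or> (\<exists>c\<in>{0<..1}. antimono_on {0<..c} (\<lambda>\<delta>. m_fun \<mu> \<delta> r) \<and> mono_on {c..1} (\<lambda>\<delta>. m_fun \<mu> \<delta> r))"
        using A mh by simp
    qed
  qed
qed

end
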